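(* Let $q$ be a prime power and $k\ge3$, $u\ge2$, $h\ge1$ integers. Let $U_1,\dots,U_h$ be $u$-dimensional subspaces of $\mathbf F_q^k$ with $U_i\cap U_j=\{0\}$ for $i\ne j$, and assume $q^k-q^{k-1}>h(q^u-1)$. Let $U$ be the set of nonzero vectors of $\mathbf F_q^k$ not in $U_1\cup\dots\cup U_h$, let $\widetilde G$ be a matrix whose columns consist of exactly one representative of each class $\{\lambda\mathbf v:\lambda\in\mathbf F_q^*\}$, $\mathbf v\in U$, and let $\mathbf C$ be the linear code with generator matrix $\widetilde G$. Then the Griesmer defect of $\mathbf C$ is at most $\sum_{i=1}^{k-u}\lfloor h/q^i\rfloor$.
   Context: For a linear $[n,k,d]_q$ code, $g_q(k,d)=\sum_{i=0}^{k-1}\lceil d/q^i\rceil$ and the Griesmer defect is $n-g_q(k,d)$. *)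

theory Defs
  imports "HOL-Analysis.Analysis"
begin

text \<open>Standard bilinear form on F_q^k (F_q^k is represented as 'a^'n, k = CARD('n)).\<close>
definition dotv :: "'a::field ^ 'n \<Rightarrow> 'a ^ 'n \<Rightarrow> 'a" where
  "dotv x v = (\<Sum>i\<in>UNIV. x $ i * v $ i)"

text \<open>The linear code generated by the matrix whose columns are the entries of the list cols:
  it is the row space of the generator matrix, i.e. all words (x G) for x in F_q^k.\<close>
definition gen_code :: "('a::field ^ 'n) list \<Rightarrow> 'a list set" where
  "gen_code cols = {map (dotv x) cols | x. True}"

definition hweight :: "'a::zero list \<Rightarrow> nat" where
  "hweight c = length (filter (\<lambda>a. a \<noteq> 0) c)"

definition code_dim :: "'a::{finite,field} list set \<Rightarrow> nat" where
  "code_dim C = (THE m. card C = CARD('a) ^ m)"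

definition min_dist :: "'a::zero list set \<Rightarrow> nat" where
  "min_dist C = Min {hweight c | c. c \<in> C \<and> (\<exists>a\<in>set c. a \<noteq> 0)}"

definition griesmer :: "nat \<Rightarrow> nat \<Rightarrow> nat \<Rightarrow> nat" where
  "griesmer q k d = (\<Sum>i<k. nat \<lceil>real d / real q ^ i\<rceil>)"

definition griesmer_defect :: "nat \<Rightarrow> 'a::{finite,field} list set \<Rightarrow> int" where
  "griesmer_defect n C = int n - int (griesmer CARD('a) (code_dim C) (min_dist C))"

end

theory Submission
  imports Defs
begin

lemma card_span_indep:
  fixes B :: "('a::{finite,field} ^ 'n) set"
  assumes "vec.independent B"
  shows "card (vec.span B) = CARD('a) ^ card B"
proof -
  have fin: "finite B" using assms by (rule vec.finiteI_independent)
  show ?thesis using fin assms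
  proof (induction B rule: finite_induct)
    case empty
    then show ?case by simp
  next
    case (insert b B)
    have indB: "vec.independent B" and nb: "b \<notin> vec.span B"
      using insert.prems insert.hyps by (auto simp: vec.independent_insert)
    let ?g = "\<lambda>(s, c). s + c *s b"
    have inj: "inj_on ?g (vec.span B \<times> UNIV)"
    proof (rule inj_onI, clarsimp)
      fix s c s' c'
      assume s: "s \<in> vec.span B" and s': "s' \<in> vec.span B" and eq: "s + c *s b = s' + c' *s b"
      show "s = s' \<and> c = c'"
      proof (cases "c = c'")
        case True then show ?thesis using eq by simp
      next
        case False
        have "(c - c') *s b = s' - s" using eq by (simp add: algebra_simps vec.scale_left_diff_distrib)
        hence "(inverse (c - c')) *s ((c - c') *s b) = (inverse (c - c')) *s (s' - s)" by simp
        hence "b = (inverse (c - c')) *s (s' - s)" using False by (metis vec.scale_scale vec.scale_one left_inverse right_minus_eq)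
        hence "b \<in> vec.span B" using s s' by (simp add: vec.span_scale vec.span_diff)
        with nb show ?thesis by simp
      qed
    qed
    have img: "?g ` (vec.span B \<times> UNIV) = vec.span (insert b B)"
    proof
      show "?g ` (vec.span B \<times> UNIV) \<subseteq> vec.span (insert b B)"
      proof clarify
        fix s c assume "s \<in> vec.span B"
        moreover have "s + c *s b - c *s b = s" by simp
        ultimately show "s + c *s b \<in> vec.span (insert b B)"
          unfolding vec.span_breakdown_eq by metis
      qed
      show "vec.span (insert b B) \<subseteq> ?g ` (vec.span B \<times> UNIV)"
      proof
        fix x assume "x \<in> vec.span (insert b B)"
        then obtain c where "x - c *s b \<in> vec.span B" by (auto simp: vec.span_breakdown_eq)
        then show "x \<in> ?g ` (vec.span B \<times> UNIV)"
          by (intro image_eqI[of _ _ "(x - c *s b, c)"]) auto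
      qed
    qed
    have "card (vec.span (insert b B)) = card (vec.span B \<times> (UNIV :: 'a set))"
      using card_image[OF inj] img by simp
    also have "\<dots> = CARD('a) ^ card B * CARD('a)"
      using insert.IH[OF indB] by (simp add: card_cartesian_product)
    also have "\<dots> = CARD('a) ^ card (insert b B)" using insert.hyps by simp
    finally show ?case .
  qed
qed

lemma card_subspace:
  fixes S :: "('a::{finite,field} ^ 'n) set"
  assumes "vec.subspace S"
  shows "card S = CARD('a) ^ vec.dim S"
proof -
  obtain B where B: "B \<subseteq> S" "vec.independent B" "S \<subseteq> vec.span B" "card B = vec.dim S"
    by (rule vec.basis_exists)
  have "vec.span B = S" using B assms by (intro vec.span_subspace) auto
  then show ?thesis using card_span_indep[OF B(2)] B(4) by simp
qed

lemma card_UNIV_vec: "CARD('a::{finite,field} ^ 'n) = CARD('a) ^ CARD('n)"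
  using card_subspace[of "UNIV :: ('a ^ 'n) set"] by (simp add: vec_dim_card)

lemma dotv_add: "dotv x (a + b) = dotv x a + dotv x b"
  by (simp add: dotv_def algebra_simps sum.distrib)
lemma dotv_scale: "dotv x (c *s v) = c * dotv x v"
  by (simp add: dotv_def sum_distrib_left algebra_simps)
lemma dotv_diff: "dotv x (a - b) = dotv x a - dotv x b"
  by (simp add: dotv_def algebra_simps sum_subtractf)
lemma dotv_zero: "dotv x 0 = 0" by (simp add: dotv_def)
lemma dotv_left_diff: "dotv (x - y) v = dotv x v - dotv y v"
  by (simp add: dotv_def algebra_simps sum_subtractf)

lemma card_field_ge2: "CARD('a::{finite,field}) \<ge> 2"
proof -
  have "card {0::'a, 1} \<le> CARD('a)" by (rule card_mono) auto
  thus ?thesis by simp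
qed

lemma card_functional_exact:
  fixes S :: "('a::{finite,field} ^ 'n) set"
  assumes S: "vec.subspace S" and s0: "s0 \<in> S" "dotv x s0 \<noteq> 0"
  shows "card {v\<in>S. dotv x v \<noteq> 0} * CARD('a) = (CARD('a) - 1) * card S"
proof -
  define t where "t = inverse (dotv x s0) *s s0"
  have t: "t \<in> S" "dotv x t = 1" using s0 S unfolding t_def
    by (auto simp: dotv_scale vec.subspace_scale)
  define K where "K = {v\<in>S. dotv x v = 0}"
  let ?g = "\<lambda>(k, c). k + c *s t"
  have inj: "inj_on ?g (K \<times> UNIV)"
  proof (rule inj_onI, clarsimp)
    fix k c k' c' assume "k \<in> K" "k' \<in> K" and eq: "k + c *s t = k' + c' *s t"
    hence "dotv x (k + c *s t) = dotv x (k' + c' *s t)" by simp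
    hence "c = c'" using \<open>k \<in> K\<close> \<open>k' \<in> K\<close> t by (simp add: K_def dotv_add dotv_scale)
    thus "k = k' \<and> c = c'" using eq by simp
  qed
  have img: "?g ` (K \<times> A) = {v\<in>S. dotv x v \<in> A}" for A
  proof
    show "?g ` (K \<times> A) \<subseteq> {v\<in>S. dotv x v \<in> A}"
      using t S by (auto simp: K_def dotv_add dotv_scale vec.subspace_add vec.subspace_scale)
    show "{v\<in>S. dotv x v \<in> A} \<subseteq> ?g ` (K \<times> A)"
    proof clarify
      fix v assume v: "v \<in> S" "dotv x v \<in> A"
      have "v - dotv x v *s t \<in> K" using v t S
        by (auto simp: K_def dotv_diff dotv_scale vec.subspace_diff vec.subspace_scale)
      moreover have "v = ?g (v - dotv x v *s t, dotv x v)" by simp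
      ultimately show "v \<in> ?g ` (K \<times> A)" using v by blast
    qed
  qed
  have c1: "card {v\<in>S. dotv x v \<in> A} = card K * card A" for A
  proof -
    have "inj_on ?g (K \<times> A)" by (rule inj_on_subset[OF inj]) auto
    hence "card (?g ` (K \<times> A)) = card (K \<times> A)" by (rule card_image)
    thus ?thesis using img[of A] by (simp add: card_cartesian_product)
  qed
  have "card S = card K * CARD('a)" using c1[of UNIV] by simp
  moreover have "card {v\<in>S. dotv x v \<noteq> 0} = card K * (CARD('a) - 1)"
    using c1[of "UNIV - {0}"] by (simp add: card_Diff_subset)
  ultimately show ?thesis by simp
qed

lemma card_functional_le:
  fixes S :: "('a::{finite,field} ^ 'n) set"
  assumes S: "vec.subspace S"
  shows "card {v\<in>S. dotv x v \<noteq> 0} * CARD('a) \<le> (CARD('a) - 1) * card S"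
proof (cases "\<exists>s0\<in>S. dotv x s0 \<noteq> 0")
  case True
  then obtain s0 where "s0 \<in> S" "dotv x s0 \<noteq> 0" by blast
  from card_functional_exact[OF S this] show ?thesis by simp
next
  case False
  have "{v\<in>S. dotv x v \<noteq> 0} = {}" using False by auto
  hence "card {v\<in>S. dotv x v \<noteq> 0} = 0" by (simp only: card.empty)
  thus ?thesis by (metis mult_0 zero_le)
qed

lemma ceil_int_minus: "\<lceil>real_of_int a - y\<rceil> = a - \<lfloor>y\<rfloor>"
proof -
  have "\<lceil>- y + real_of_int a\<rceil> = \<lceil>- y\<rceil> + a" by (rule ceiling_add_of_int)
  thus ?thesis by (simp add: ceiling_minus algebra_simps)
qed

lemma griesmer_arith:
  fixes q k u h :: nat
  assumes q: "q \<ge> 2" and uk: "u \<le> k" and u1: "u \<ge> 1" and pos: "h * q ^ (u - 1) \<le> q ^ (k - 1)"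
  shows "int (griesmer q k (q ^ (k - 1) - h * q ^ (u - 1)))
    = (\<Sum>i<k. int q ^ i) - int h * (\<Sum>i<u. int q ^ i) - int (\<Sum>i=1..k-u. h div q ^ i)"
proof -
  define m where "m = h * q ^ (u - 1)"
  have trm: "int (nat \<lceil>real (q ^ (k - 1) - m) / real q ^ i\<rceil>) = int q ^ (k - 1 - i) - int (m div q ^ i)"
    if i: "i < k" for i
  proof -
    have "real (q ^ (k - 1) - m) / real q ^ i = real q ^ (k - 1) / real q ^ i - real m / real q ^ i"
      using pos by (simp add: m_def of_nat_diff diff_divide_distrib)
    also have "real q ^ (k - 1) / real q ^ i = real_of_int (int q ^ (k - 1 - i))"
    proof -
      have "real q ^ (k - 1) = real q ^ (k - 1 - i) * real q ^ i"
        using i by (simp flip: power_add)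
      thus ?thesis using q by simp
    qed
    finally have "\<lceil>real (q ^ (k - 1) - m) / real q ^ i\<rceil> = \<lceil>real_of_int (int q ^ (k - 1 - i)) - real m / real q ^ i\<rceil>"
      by simp
    also have "\<dots> = int q ^ (k - 1 - i) - \<lfloor>real m / real q ^ i\<rfloor>" by (rule ceil_int_minus)
    also have "\<lfloor>real m / real q ^ i\<rfloor> = int (m div q ^ i)"
      using floor_divide_of_nat_eq[of m "q ^ i"] by simp
    finally have eq: "\<lceil>real (q ^ (k - 1) - m) / real q ^ i\<rceil> = int q ^ (k - 1 - i) - int (m div q ^ i)" .
    have "m div q ^ i \<le> q ^ (k - 1) div q ^ i" using pos by (simp add: m_def div_le_mono)
    also have "q ^ (k - 1) div q ^ i = q ^ (k - 1 - i)"
    proof -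
      have "q ^ (k - 1) = q ^ (k - 1 - i) * q ^ i" using i by (simp flip: power_add)
      thus ?thesis using q by simp
    qed
    finally show ?thesis using eq by simp
  qed
  have "int (griesmer q k (q ^ (k - 1) - m)) = (\<Sum>i<k. int (nat \<lceil>real (q ^ (k - 1) - m) / real q ^ i\<rceil>))"
    by (simp add: griesmer_def)
  also have "\<dots> = (\<Sum>i<k. int q ^ (k - 1 - i) - int (m div q ^ i))"
    by (rule sum.cong[OF refl], rule trm, simp)
  also have "\<dots> = (\<Sum>i<k. int q ^ (k - 1 - i)) - (\<Sum>i<k. int (m div q ^ i))"
    by (simp add: sum_subtractf)
  also have "(\<Sum>i<k. int q ^ (k - 1 - i)) = (\<Sum>i<k. int q ^ i)"
    using sum.nat_diff_reindex[of "\<lambda>i. int q ^ i" k] by simp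
  also have "(\<Sum>i<k. int (m div q ^ i)) = (\<Sum>i<u. int (m div q ^ i)) + (\<Sum>i\<in>{u..<k}. int (m div q ^ i))"
  proof -
    have "{..<k} = {..<u} \<union> {u..<k}" using uk by auto
    moreover have "{..<u} \<inter> {u..<k} = {}" by auto
    ultimately show ?thesis
      using sum.union_disjoint[of "{..<u}" "{u..<k}" "\<lambda>i. int (m div q ^ i)"] by simp
  qed
  also have "(\<Sum>i<u. int (m div q ^ i)) = int h * (\<Sum>i<u. int q ^ i)"
  proof -
    have "(\<Sum>i<u. int (m div q ^ i)) = (\<Sum>i<u. int h * int q ^ (u - 1 - i))"
    proof (rule sum.cong)
      fix i assume "i \<in> {..<u}"
      hence "q ^ (u - 1) = q ^ (u - 1 - i) * q ^ i" by (simp flip: power_add)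
      hence "m div q ^ i = h * q ^ (u - 1 - i)" using q by (simp add: m_def)
      thus "int (m div q ^ i) = int h * int q ^ (u - 1 - i)" by simp
    qed simp
    also have "\<dots> = int h * (\<Sum>i<u. int q ^ (u - 1 - i))" by (simp add: sum_distrib_left)
    also have "(\<Sum>i<u. int q ^ (u - 1 - i)) = (\<Sum>i<u. int q ^ i)"
      using sum.nat_diff_reindex[of "\<lambda>i. int q ^ i" u] by simp
    finally show ?thesis .
  qed
  also have "(\<Sum>i\<in>{u..<k}. int (m div q ^ i)) = int (\<Sum>i=1..k-u. h div q ^ i)"
  proof -
    have "(\<Sum>i\<in>{u..<k}. int (m div q ^ i)) = (\<Sum>j\<in>{1..k-u}. int (m div q ^ (j + u - 1)))"
      by (rule sum.reindex_bij_witness[of _ "\<lambda>j. j + u - 1" "\<lambda>i. i + 1 - u"]) (use u1 in auto)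
    also have "\<dots> = (\<Sum>j\<in>{1..k-u}. int (h div q ^ j))"
    proof (rule sum.cong)
      fix j assume "j \<in> {1..k-u}"
      hence "q ^ (j + u - 1) = q ^ (u - 1) * q ^ j" using u1 by (simp add: add.commute flip: power_add)
      thus "int (m div q ^ (j + u - 1)) = int (h div q ^ j)" using q
        by (simp add: m_def div_mult_mult2)
    qed simp
    finally show ?thesis by simp
  qed
  finally show ?thesis by (simp add: m_def)
qed

lemma aux_lin:
  fixes Q N G A B S H Pk Pu :: int
  assumes "G = A - H * B - S" "(Q - 1) * N = Pk - 1 - H * (Pu - 1)"
    "(Q - 1) * A = Pk - 1" "(Q - 1) * B = Pu - 1"
  shows "(Q - 1) * (N - G) = (Q - 1) * S"
proof -
  have "(Q - 1) * (N - G) = (Q - 1) * N - (Q - 1) * A + H * ((Q - 1) * B) + (Q - 1) * S"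
    unfolding assms(1) by (simp add: algebra_simps)
  also have "\<dots> = (Q - 1) * S" unfolding assms(2-4) by simp
  finally show ?thesis .
qed

lemma griesmer_mono: "d0 \<le> d \<Longrightarrow> griesmer q k d0 \<le> griesmer q k d"
  unfolding griesmer_def
  by (intro sum_mono nat_mono ceiling_mono divide_right_mono) auto

lemma dotv_axis: "dotv x (axis i 1) = x $ i"
  by (simp add: dotv_def axis_def if_distrib cong: if_cong)

lemma hweight_map: "distinct cols \<Longrightarrow> hweight (map (dotv x) cols) = card {w\<in>set cols. dotv x w \<noteq> 0}"
proof -
  assume d: "distinct cols"
  have "hweight (map (dotv x) cols) = length (filter (\<lambda>w. dotv x w \<noteq> 0) cols)"
    by (simp add: hweight_def filter_map comp_def)
  also have "\<dots> = card (set (filter (\<lambda>w. dotv x w \<noteq> 0) cols))"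
    by (rule distinct_card[symmetric]) (simp add: d)
  finally show ?thesis by simp
qed

theorem lemma2p2:
  fixes Us :: "nat \<Rightarrow> ('a::{finite,field} ^ 'n) set"
    and u h :: nat
    and cols :: "('a ^ 'n) list"
  defines "q \<equiv> CARD('a)"
  defines "k \<equiv> CARD('n)"
  defines "Uset \<equiv> {v :: 'a ^ 'n. v \<noteq> 0 \<and> (\<forall>i\<in>{1..h}. v \<notin> Us i)}"
  assumes k3: "k \<ge> 3" and u2: "u \<ge> 2" and h1: "h \<ge> 1"
    and sub: "\<And>i. i \<in> {1..h} \<Longrightarrow> vec.subspace (Us i) \<and> vec.dim (Us i) = u"
    and disj: "\<And>i j. i \<in> {1..h} \<Longrightarrow> j \<in> {1..h} \<Longrightarrow> i \<noteq> j \<Longrightarrow> Us i \<inter> Us j = {0}"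
    and cond: "q ^ k - q ^ (k - 1) > h * (q ^ u - 1)"
    and dist: "distinct cols"
    and cols_in: "set cols \<subseteq> Uset"
    and reps: "\<And>v. v \<in> Uset \<Longrightarrow> \<exists>!w. w \<in> set cols \<and> (\<exists>c. c \<noteq> 0 \<and> w = c *s v)"
  shows "griesmer_defect (length cols) (gen_code cols) \<le> int (\<Sum>i=1..k-u. h div q ^ i)"
proof -
  have q2: "q \<ge> 2" unfolding q_def by (rule card_field_ge2)
  have cardUs: "card (Us i) = q ^ u" if "i \<in> {1..h}" for i
    using card_subspace[of "Us i"] sub[OF that] by (simp add: q_def)
  have cardV: "card (UNIV :: ('a ^ 'n) set) = q ^ k" by (simp add: card_UNIV_vec q_def k_def)
  define n where "n = length cols"
  have n_card: "n = card (set cols)" using dist by (simp add: n_def distinct_card)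
  have cnt: "card {v\<in>Uset. P v} = card {w\<in>set cols. P w} * (q - 1)"
    if P: "\<And>c v. c \<noteq> 0 \<Longrightarrow> P (c *s v) = P v" for P
  proof -
    let ?A = "{w\<in>set cols. P w} \<times> (UNIV - {0::'a})"
    let ?g = "\<lambda>(w, c). c *s w"
    have scaleU: "c *s w \<in> Uset" if "w \<in> Uset" "c \<noteq> 0" for w c
    proof -
      have "c *s w \<notin> Us i" if i: "i \<in> {1..h}" for i
      proof
        assume "c *s w \<in> Us i"
        hence "inverse c *s (c *s w) \<in> Us i" using sub[OF i] vec.subspace_scale by blast
        hence "w \<in> Us i" using \<open>c \<noteq> 0\<close> by (simp add: vec.scale_scale)
        thus False using \<open>w \<in> Uset\<close> i by (auto simp: Uset_def)
      qed
      thus ?thesis using that by (auto simp: Uset_def)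
    qed
    have img: "?g ` ?A = {v\<in>Uset. P v}"
    proof
      show "?g ` ?A \<subseteq> {v\<in>Uset. P v}"
        using cols_in scaleU P by auto
      show "{v\<in>Uset. P v} \<subseteq> ?g ` ?A"
      proof clarify
        fix v assume v: "v \<in> Uset" "P v"
        then obtain w c where w: "w \<in> set cols" "c \<noteq> 0" "w = c *s v" using reps by blast
        have "v = inverse c *s w" using w by (simp add: vec.scale_scale)
        moreover have "P w" using w v P by simp
        ultimately show "v \<in> ?g ` ?A" using w by (intro image_eqI[of _ _ "(w, inverse c)"]) auto
      qed
    qed
    have inj: "inj_on ?g ?A"
    proof (rule inj_onI)
      fix a b assume a: "a \<in> ?A" and b: "b \<in> ?A" and eqg: "?g a = ?g b"
      obtain w c where ab1: "a = (w, c)" by (cases a)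
      obtain w' c' where ab2: "b = (w', c')" by (cases b)
      have w: "w \<in> set cols" "w' \<in> set cols" "c \<noteq> 0" "c' \<noteq> 0" using a b ab1 ab2 by auto
      have eq: "c *s w = c' *s w'" using eqg ab1 ab2 by simp
      have wU: "w \<in> Uset" "w' \<in> Uset" using w cols_in by auto
      have vU: "c *s w \<in> Uset" using scaleU wU w by simp
      have e1: "w = inverse c *s (c *s w)" using w by (simp add: vec.scale_scale)
      have e2: "w' = inverse c' *s (c *s w)" using w eq by (simp add: vec.scale_scale)
      have "w = w'" using reps[OF vU] w e1 e2
        by (metis inverse_nonzero_iff_nonzero)
      moreover have "w \<noteq> 0" using wU by (simp add: Uset_def)
      ultimately show "a = b" using eq ab1 ab2 by simp
    qed
    have "card {v\<in>Uset. P v} = card ?A" using card_image[OF inj] img by simp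
    also have "\<dots> = card {w\<in>set cols. P w} * (q - 1)"
      by (simp add: card_cartesian_product card_Diff_subset q_def)
    finally show ?thesis .
  qed
  have n_eq: "card Uset = n * (q - 1)" using cnt[of "\<lambda>_. True"] n_card by simp
  define W where "W = (\<Union>i\<in>{1..h}. Us i - {0})"
  have UsetW: "Uset = (UNIV - {0}) - W" by (auto simp: Uset_def W_def)
  have cardW: "card W = h * (q ^ u - 1)"
  proof -
    have "card W = (\<Sum>i\<in>{1..h}. card (Us i - {0}))"
      unfolding W_def
    proof (rule card_UN_disjoint)
      show "\<forall>i\<in>{1..h}. \<forall>j\<in>{1..h}. i \<noteq> j \<longrightarrow> (Us i - {0}) \<inter> (Us j - {0}) = {}"
        using disj by blast
    qed auto
    also have "\<dots> = (\<Sum>i\<in>{1..h}. q ^ u - 1)"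
      by (rule sum.cong) (auto simp: card_Diff_subset cardUs sub vec.subspace_0)
    finally show ?thesis by simp
  qed
  have cardUset: "card Uset = q ^ k - 1 - h * (q ^ u - 1)"
  proof -
    have "W \<subseteq> UNIV - {0}" by (auto simp: W_def)
    hence "card Uset = card (UNIV - {0 :: 'a ^ 'n}) - card W"
      unfolding UsetW by (simp add: card_Diff_subset)
    thus ?thesis using cardV cardW by (simp add: card_Diff_subset)
  qed
  define d0 where "d0 = q ^ (k - 1) - h * q ^ (u - 1)"
  have qk: "q ^ k = q * q ^ (k - 1)" using k3 by (metis Suc_diff_1 less_le_trans power_Suc zero_less_numeral le_less)
  have qu: "q ^ u = q * q ^ (u - 1)" using u2 by (metis Suc_diff_1 less_le_trans power_Suc zero_less_numeral le_less)
  have hlt: "h * q ^ (u - 1) < q ^ (k - 1)"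
  proof -
    have "(q - 1) * (h * q ^ (u - 1)) = h * (q ^ u - q ^ (u - 1))"
      using qu by (simp add: algebra_simps diff_mult_distrib)
    also have "\<dots> \<le> h * (q ^ u - 1)"
    proof -
      have "1 \<le> q ^ (u - 1)" using q2 by simp
      thus ?thesis by (intro mult_le_mono2 diff_le_mono2)
    qed
    also have "\<dots> < q ^ k - q ^ (k - 1)" by (rule cond)
    also have "\<dots> = (q - 1) * q ^ (k - 1)" using qk by (simp add: diff_mult_distrib)
    finally show ?thesis by simp
  qed
  have d0pos: "d0 > 0" using hlt by (simp add: d0_def)
  have wt: "hweight (map (dotv x) cols) \<ge> d0" if x: "x \<noteq> 0" for x
  proof -
    define w where "w = hweight (map (dotv x) cols)"
    have w1: "card {v\<in>Uset. dotv x v \<noteq> 0} = w * (q - 1)"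
      using cnt[of "\<lambda>v. dotv x v \<noteq> 0"] hweight_map[OF dist] by (simp add: dotv_scale w_def)
    obtain i where "x $ i \<noteq> 0" using x by (metis vec_eq_iff zero_index)
    hence all: "card {v\<in>UNIV. dotv x v \<noteq> 0} * q = (q - 1) * q ^ k"
      using card_functional_exact[of "UNIV :: ('a^'n) set" "axis i 1" x] cardV
      by (simp add: dotv_axis q_def)
    have each: "card {v\<in>Us i. dotv x v \<noteq> 0} * q \<le> (q - 1) * q ^ u" if "i \<in> {1..h}" for i
      using card_functional_le[of "Us i" x] sub[OF that] cardUs[OF that] by (simp add: q_def)
    have sub1: "{v\<in>UNIV. dotv x v \<noteq> 0} \<subseteq> {v\<in>Uset. dotv x v \<noteq> 0} \<union> (\<Union>i\<in>{1..h}. {v\<in>Us i. dotv x v \<noteq> 0})"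
      by (auto simp: Uset_def dotv_zero)
    have "card {v\<in>UNIV. dotv x v \<noteq> 0} \<le> card ({v\<in>Uset. dotv x v \<noteq> 0} \<union> (\<Union>i\<in>{1..h}. {v\<in>Us i. dotv x v \<noteq> 0}))"
      by (rule card_mono[OF _ sub1]) simp
    also have "\<dots> \<le> card {v\<in>Uset. dotv x v \<noteq> 0} + card (\<Union>i\<in>{1..h}. {v\<in>Us i. dotv x v \<noteq> 0})"
      by (rule card_Un_le)
    also have "card (\<Union>i\<in>{1..h}. {v\<in>Us i. dotv x v \<noteq> 0}) \<le> (\<Sum>i\<in>{1..h}. card {v\<in>Us i. dotv x v \<noteq> 0})"
      by (rule card_UN_le) simp
    finally have "card {v\<in>UNIV. dotv x v \<noteq> 0} * q \<le> (w * (q - 1) + (\<Sum>i\<in>{1..h}. card {v\<in>Us i. dotv x v \<noteq> 0})) * q"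
      using w1 by simp
    also have "\<dots> = w * (q - 1) * q + (\<Sum>i\<in>{1..h}. card {v\<in>Us i. dotv x v \<noteq> 0} * q)"
      by (simp add: add_mult_distrib sum_distrib_right)
    also have "(\<Sum>i\<in>{1..h}. card {v\<in>Us i. dotv x v \<noteq> 0} * q) \<le> (\<Sum>i\<in>{1..h}. (q - 1) * q ^ u)"
      by (rule sum_mono) (rule each)
    finally have "(q - 1) * q ^ k \<le> (q - 1) * (w * q + h * q ^ u)"
      using all by (simp add: algebra_simps)
    hence "q ^ k \<le> w * q + h * q ^ u" using q2 by simp
    hence "q * q ^ (k - 1) \<le> q * (w + h * q ^ (u - 1))" using qk qu by (simp add: algebra_simps)
    hence "q ^ (k - 1) \<le> w + h * q ^ (u - 1)" using q2 by simp
    thus ?thesis by (simp add: d0_def w_def)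
  qed
  have C_eq: "gen_code cols = (\<lambda>x. map (dotv x) cols) ` UNIV" by (auto simp: gen_code_def)
  have injC: "inj (\<lambda>x. map (dotv x) cols)"
  proof (rule injI, rule ccontr)
    fix x y assume eq: "map (dotv x) cols = map (dotv y) cols" and ne: "x \<noteq> y"
    have "map (dotv (x - y)) cols = map (\<lambda>_. 0) cols"
      using eq by (simp add: dotv_left_diff)
    hence "hweight (map (dotv (x - y)) cols) = 0" by (simp add: hweight_def filter_map comp_def)
    with wt[of "x - y"] ne d0pos show False by simp
  qed
  have cardC: "card (gen_code cols) = q ^ k" using C_eq card_image[OF injC] cardV by simp
  have dimC: "code_dim (gen_code cols) = k"
    unfolding code_dim_def
  proof (rule the_equality)
    show "card (gen_code cols) = CARD('a) ^ k" using cardC by (simp add: q_def)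
    fix m assume "card (gen_code cols) = CARD('a) ^ m"
    hence "q ^ m = q ^ k" using cardC by (simp add: q_def)
    thus "m = k" using q2 by (simp add: power_inject_exp)
  qed
  have mdC: "min_dist (gen_code cols) \<ge> d0"
  proof -
    let ?S = "{hweight c | c. c \<in> gen_code cols \<and> (\<exists>a\<in>set c. a \<noteq> 0)}"
    have fin: "finite ?S"
    proof -
      have "?S \<subseteq> hweight ` gen_code cols" by auto
      moreover have "finite (gen_code cols)" using C_eq by simp
      ultimately show ?thesis by (meson finite_imageI finite_subset)
    qed
    obtain i :: 'n where True by simp
    have ax: "axis i (1::'a) \<noteq> 0" by (simp add: axis_eq_0_iff)
    have "hweight (map (dotv (axis i 1)) cols) > 0" using wt[OF ax] d0pos by simp
    hence "\<exists>a\<in>set (map (dotv (axis i 1)) cols). a \<noteq> 0"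
      by (auto simp: hweight_def filter_empty_conv)
    hence ne: "?S \<noteq> {}" using C_eq by blast
    have lb: "\<forall>m\<in>?S. d0 \<le> m"
    proof
      fix m assume "m \<in> ?S"
      then obtain c where c: "c \<in> gen_code cols" "\<exists>a\<in>set c. a \<noteq> 0" and mc: "m = hweight c" by blast
      then obtain x where x: "c = map (dotv x) cols" using C_eq by blast
      have "x \<noteq> 0" using c x by (auto simp: dotv_def)
      thus "d0 \<le> m" using wt x mc by simp
    qed
    show ?thesis unfolding min_dist_def using fin ne lb by (simp add: Min_ge_iff)
  qed
  have uk: "u \<le> k"
  proof -
    have "q ^ (u - 1) \<le> h * q ^ (u - 1)" using h1 by simp
    hence "q ^ (u - 1) < q ^ (k - 1)" using hlt by linarith
    hence "u - 1 < k - 1" using q2 by (simp add: power_strict_increasing_iff)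
    thus ?thesis by simp
  qed
  have G: "int (griesmer q k d0) = (\<Sum>i<k. int q ^ i) - int h * (\<Sum>i<u. int q ^ i) - int (\<Sum>i=1..k-u. h div q ^ i)"
    unfolding d0_def using griesmer_arith[OF q2 uk _ less_imp_le[OF hlt]] u2 by simp
  define S where "S = (\<Sum>i=1..k-u. h div q ^ i)"
  have geo: "(int q - 1) * (\<Sum>i<m. int q ^ i) = int q ^ m - 1" for m
    using power_diff_1_eq[of "int q" m] by simp
  have nI: "(int q - 1) * int n = int q ^ k - 1 - int h * (int q ^ u - 1)"
  proof -
    have e0: "int (n * (q - 1)) = int (q ^ k - 1 - h * (q ^ u - 1))" using n_eq cardUset by simp
    moreover have "h * (q ^ u - 1) \<le> q ^ k - 1" using cond by linarith
    moreover have "1 \<le> q ^ u" "1 \<le> q ^ k" using q2 by simp_all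
    ultimately have
      e3: "int (q ^ k - 1 - h * (q ^ u - 1)) = int (q ^ k - 1) - int (h * (q ^ u - 1))"
      and e1: "int (q ^ u - 1) = int q ^ u - 1" and e2: "int (q ^ k - 1) = int q ^ k - 1"
      by (simp_all add: of_nat_diff)
    have e4: "int (n * (q - 1)) = int n * (int q - 1)" using q2 by (simp add: of_nat_diff)
    have "(int q - 1) * int n = int (n * (q - 1))" using e4 by (simp only: mult.commute)
    also have "\<dots> = int (q ^ k - 1) - int h * int (q ^ u - 1)" unfolding e0 e3 by (simp only: of_nat_mult)
    also have "\<dots> = int q ^ k - 1 - int h * (int q ^ u - 1)" by (simp only: e1 e2)
    finally show ?thesis .
  qed
  have "(int q - 1) * (int n - int (griesmer q k d0)) = (int q - 1) * int S"
    by (rule aux_lin[OF G[folded S_def] nI geo[of k] geo[of u]])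
  hence nG: "int n - int (griesmer q k d0) = int S" using q2 by simp
  have "griesmer q k d0 \<le> griesmer q k (min_dist (gen_code cols))"
    by (rule griesmer_mono[OF mdC])
  hence "griesmer_defect n (gen_code cols) \<le> int S"
    using nG dimC by (simp add: griesmer_defect_def q_def)
  thus ?thesis by (simp add: n_def S_def)
qed

end
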